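(* Let $c\in\mathbb{C}$ and consider the complex quadratic system \[ \dot z = z+\tfrac{1}{16}\big(21cz^2-6czw+cw^2\big),\qquad \dot w = -w+\tfrac{1}{16}\big(-27cz^2+18czw-7cw^2\big). \] Put \[ l_1=z+\tfrac{3c}{16}z^2+\tfrac{c}{8}zw+\tfrac{c}{48}w^2,\quad l_2=w+\tfrac{9c}{16}z^2+\tfrac{3c}{8}zw+\tfrac{c}{16}w^2, \] \[ l_3=1+3cz+\tfrac{27c^2}{8}z^2+cw-\tfrac{3c^2}{4}zw+\tfrac{3c^2}{8}w^2,\quad l_4=1+\tfrac{3c}{2}z+\tfrac{9c^2}{16}z^2+\tfrac{c}{2}w+\tfrac{3c^2}{8}zw+\tfrac{c^2}{16}w^2 . \] Then $l_1,\dots,l_4$ are Darboux factors of the system and the analytic change of coordinates $z_1=l_1l_3l_4^{-3}$, $w_1=l_2l_3l_4^{-3}$ (defined near the origin) transforms the system into $\dot z_1=z_1$, $\dot w_1=-w_1$.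
   Context: A Darboux factor of a system $\dot z = F(z,w)$, $\dot w = G(z,w)$ is a polynomial $f(z,w)$ such that $f_zF+f_wG=Kf$ for some polynomial $K$, called its cofactor. *)

theory Defs
  imports "HOL-Analysis.Analysis" "HOL-Computational_Algebra.Polynomial"
begin

text \<open>Polynomials in two complex variables z, w are represented as
  complex poly poly: a polynomial in z whose coefficients are polynomials in w.\<close>

type_synonym bipoly = "complex poly poly"

definition Zv :: bipoly where "Zv = [:0, 1:]"
definition Wv :: bipoly where "Wv = [:[:0, 1:]:]"
definition Cst :: "complex \<Rightarrow> bipoly" where "Cst k = [:[:k:]:]"

definition beval :: "bipoly \<Rightarrow> complex \<Rightarrow> complex \<Rightarrow> complex" where
  "beval p z w = poly (map_poly (\<lambda>q. poly q w) p) z"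

definition dZ :: "bipoly \<Rightarrow> bipoly" where "dZ p = pderiv p"
definition dW :: "bipoly \<Rightarrow> bipoly" where "dW p = map_poly pderiv p"

definition darboux_factor :: "bipoly \<Rightarrow> bipoly \<Rightarrow> bipoly \<Rightarrow> bool" where
  "darboux_factor F G f \<longleftrightarrow> (\<exists>K. dZ f * F + dW f * G = K * f)"

definition sysF :: "complex \<Rightarrow> bipoly" where
  "sysF c = Zv + Cst (c/16) * (Cst 21 * Zv^2 - Cst 6 * Zv * Wv + Wv^2)"
definition sysG :: "complex \<Rightarrow> bipoly" where
  "sysG c = - Wv + Cst (c/16) * (- Cst 27 * Zv^2 + Cst 18 * Zv * Wv - Cst 7 * Wv^2)"

definition l1 :: "complex \<Rightarrow> bipoly" where
  "l1 c = Zv + Cst (3*c/16) * Zv^2 + Cst (c/8) * Zv * Wv + Cst (c/48) * Wv^2"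
definition l2 :: "complex \<Rightarrow> bipoly" where
  "l2 c = Wv + Cst (9*c/16) * Zv^2 + Cst (3*c/8) * Zv * Wv + Cst (c/16) * Wv^2"
definition l3 :: "complex \<Rightarrow> bipoly" where
  "l3 c = 1 + Cst (3*c) * Zv + Cst (27*c^2/8) * Zv^2 + Cst c * Wv
          - Cst (3*c^2/4) * Zv * Wv + Cst (3*c^2/8) * Wv^2"
definition l4 :: "complex \<Rightarrow> bipoly" where
  "l4 c = 1 + Cst (3*c/2) * Zv + Cst (9*c^2/16) * Zv^2 + Cst (c/2) * Wv
          + Cst (3*c^2/8) * Zv * Wv + Cst (c^2/16) * Wv^2"

definition Z1 :: "complex \<Rightarrow> complex \<Rightarrow> complex \<Rightarrow> complex" where
  "Z1 c z w = beval (l1 c) z w * beval (l3 c) z w / (beval (l4 c) z w)^3"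
definition W1 :: "complex \<Rightarrow> complex \<Rightarrow> complex \<Rightarrow> complex" where
  "W1 c z w = beval (l2 c) z w * beval (l3 c) z w / (beval (l4 c) z w)^3"

end

theory Submission
  imports Defs
begin

lemma beval_alt: "beval p z w = poly (poly p [:z:]) w"
  unfolding beval_def
  by (induction p) (simp_all add: map_poly_pCons)

lemma beval_add[simp]: "beval (p + q) z w = beval p z w + beval q z w"
  and beval_mult[simp]: "beval (p * q) z w = beval p z w * beval q z w"
  and beval_minus[simp]: "beval (p - q) z w = beval p z w - beval q z w"
  and beval_uminus[simp]: "beval (- p) z w = - beval p z w"
  and beval_power[simp]: "beval (p ^ n) z w = beval p z w ^ n"
  and beval_one[simp]: "beval 1 z w = 1"
  and beval_zero[simp]: "beval 0 z w = 0"
  and beval_Zv[simp]: "beval Zv z w = z"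
  and beval_Wv[simp]: "beval Wv z w = w"
  and beval_Cst[simp]: "beval (Cst k) z w = k"
  by (simp_all add: beval_alt Zv_def Wv_def Cst_def poly_power)

lemma beval_pCons: "beval (pCons a p) z w = poly a w + z * beval p z w"
  by (simp add: beval_alt)

lemma beval_inj0:
  assumes "\<And>z w. beval r z w = 0" shows "r = 0"
proof -
  have "\<And>w. map_poly (\<lambda>q. poly q w) r = 0"
    using assms unfolding beval_def by (simp add: poly_eq_poly_eq_iff[symmetric] fun_eq_iff)
  hence "\<And>w i. poly (coeff r i) w = 0"
    by (metis coeff_0 coeff_map_poly poly_0)
  hence "\<And>i. coeff r i = 0"
    by (metis poly_all_0_iff_0)
  thus ?thesis by (simp add: poly_eqI)
qed

lemma beval_inj:
  assumes "\<And>z w. beval p z w = beval q z w" shows "p = q"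
  using beval_inj0[of "p - q"] assms by simp


lemma dZ_pCons: "dZ (pCons a p) = p + pCons 0 (dZ p)"
  by (simp add: dZ_def pderiv_pCons)
lemma dW_pCons: "dW (pCons a p) = pCons (pderiv a) (dW p)"
  by (simp add: dW_def map_poly_pCons)

lemma poly_snd_deriv:
  "((\<lambda>x::complex\<times>complex. poly a (snd x)) has_derivative (\<lambda>h. poly (pderiv a) (snd x) * snd h)) (at x)"
proof -
  have "(poly a has_derivative (\<lambda>h. h * poly (pderiv a) (snd x))) (at (snd x))"
    using poly_DERIV[of a "snd x"] by (simp add: has_field_derivative_def mult_commute_abs)
  from has_derivative_compose[OF has_derivative_snd[of "\<lambda>x. x" "\<lambda>x. x"] this]
  show ?thesis by (simp add: mult.commute o_def)
qed

lemma beval_has_derivative: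
  "((\<lambda>x. beval p (fst x) (snd x)) has_derivative
     (\<lambda>h. beval (dZ p) (fst x) (snd x) * fst h + beval (dW p) (fst x) (snd x) * snd h)) (at x)"
proof (induction p)
  case 0
  then show ?case by (simp add: dZ_def dW_def)
next
  case (pCons a p)
  have "((\<lambda>x. poly a (snd x) + fst x * beval p (fst x) (snd x)) has_derivative
     (\<lambda>h. poly (pderiv a) (snd x) * snd h + (fst x * (beval (dZ p) (fst x) (snd x) * fst h + beval (dW p) (fst x) (snd x) * snd h)
        + fst h * beval p (fst x) (snd x)))) (at x)"
    by (intro has_derivative_add poly_snd_deriv has_derivative_mult has_derivative_fst[of "\<lambda>x. x"]
        has_derivative_ident pCons.IH)
  then show ?case
    by (simp add: beval_pCons dZ_pCons dW_pCons algebra_simps)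
qed

lemma beval_deriv_z:
  "((\<lambda>u. beval p u w) has_field_derivative beval (dZ p) z w) (at z)"
proof -
  have "((\<lambda>u. (u, w)) has_derivative (\<lambda>h. (h, 0))) (at z)"
    by (auto intro!: derivative_eq_intros)
  from has_derivative_compose[OF this beval_has_derivative[of p "(z,w)"]]
  show ?thesis by (simp add: has_field_derivative_def o_def mult_commute_abs)
qed

lemma beval_deriv_w:
  "((\<lambda>v. beval p z v) has_field_derivative beval (dW p) z w) (at w)"
proof -
  have "((\<lambda>v. (z, v)) has_derivative (\<lambda>h. (0, h))) (at w)"
    by (auto intro!: derivative_eq_intros)
  from has_derivative_compose[OF this beval_has_derivative[of p "(z,w)"]]
  show ?thesis by (simp add: has_field_derivative_def o_def mult_commute_abs)
qed


lemma dZ_eval: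
  assumes "\<And>u. beval p u w = E u" "(E has_field_derivative D) (at z)"
  shows "beval (dZ p) z w = D"
proof -
  have "(E has_field_derivative beval (dZ p) z w) (at z)"
    using beval_deriv_z[of p w z] assms(1) by simp
  thus ?thesis using assms(2) DERIV_unique by blast
qed

lemma dW_eval:
  assumes "\<And>v. beval p z v = E v" "(E has_field_derivative D) (at w)"
  shows "beval (dW p) z w = D"
proof -
  have "(E has_field_derivative beval (dW p) z w) (at w)"
    using beval_deriv_w[of p z w] assms(1) by simp
  thus ?thesis using assms(2) DERIV_unique by blast
qed

lemma l1z: "beval (dZ (l1 c)) z w = 1 + 3*c/8*z + c/8*w"
  by (rule dZ_eval[where E="\<lambda>u. u + 3*c/16*u^2 + c/8*u*w + c/48*w^2"])
     (auto simp: l1_def field_simps intro!: derivative_eq_intros)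
lemma l1w: "beval (dW (l1 c)) z w = c/8*z + c/24*w"
  by (rule dW_eval[where E="\<lambda>y. z + 3*c/16*z^2 + c/8*z*y + c/48*y^2"])
     (auto simp: l1_def field_simps intro!: derivative_eq_intros)

lemma darb1: "dZ (l1 c) * sysF c + dW (l1 c) * sysG c = (1 + Cst (3*c/2) * Zv - Cst (c/2) * Wv) * l1 c"
  apply (rule beval_inj)
  apply (simp add: l1z l1w)
  apply (simp add: sysF_def sysG_def l1_def field_simps)
  apply algebra
  done


lemma l2z: "beval (dZ (l2 c)) z w = 9*c/8*z + 3*c/8*w"
  by (rule dZ_eval[where E="\<lambda>u. w + 9*c/16*u^2 + 3*c/8*u*w + c/16*w^2"])
     (auto simp: l2_def field_simps intro!: derivative_eq_intros)
lemma l2w: "beval (dW (l2 c)) z w = 1 + 3*c/8*z + c/8*w"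
  by (rule dW_eval[where E="\<lambda>y. y + 9*c/16*z^2 + 3*c/8*z*y + c/16*y^2"])
     (auto simp: l2_def field_simps intro!: derivative_eq_intros)
lemma l3z: "beval (dZ (l3 c)) z w = 3*c + 27*c^2/4*z - 3*c^2/4*w"
  by (rule dZ_eval[where E="\<lambda>u. 1 + 3*c*u + 27*c^2/8*u^2 + c*w - 3*c^2/4*u*w + 3*c^2/8*w^2"])
     (auto simp: l3_def field_simps intro!: derivative_eq_intros)
lemma l3w: "beval (dW (l3 c)) z w = c - 3*c^2/4*z + 3*c^2/4*w"
  by (rule dW_eval[where E="\<lambda>y. 1 + 3*c*z + 27*c^2/8*z^2 + c*y - 3*c^2/4*z*y + 3*c^2/8*y^2"])
     (auto simp: l3_def field_simps intro!: derivative_eq_intros)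
lemma l4z: "beval (dZ (l4 c)) z w = 3*c/2 + 9*c^2/8*z + 3*c^2/8*w"
  by (rule dZ_eval[where E="\<lambda>u. 1 + 3*c/2*u + 9*c^2/16*u^2 + c/2*w + 3*c^2/8*u*w + c^2/16*w^2"])
     (auto simp: l4_def field_simps intro!: derivative_eq_intros)
lemma l4w: "beval (dW (l4 c)) z w = c/2 + 3*c^2/8*z + c^2/8*w"
  by (rule dW_eval[where E="\<lambda>y. 1 + 3*c/2*z + 9*c^2/16*z^2 + c/2*y + 3*c^2/8*z*y + c^2/16*y^2"])
     (auto simp: l4_def field_simps intro!: derivative_eq_intros)

lemma darb2: "dZ (l2 c) * sysF c + dW (l2 c) * sysG c = (- 1 + Cst (3*c/2) * Zv - Cst (c/2) * Wv) * l2 c"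
  apply (rule beval_inj)
  apply (simp add: l2z l2w)
  apply (simp add: sysF_def sysG_def l2_def field_simps)
  apply algebra
  done
lemma darb3: "dZ (l3 c) * sysF c + dW (l3 c) * sysG c = (Cst (3*c) * Zv - Cst c * Wv) * l3 c"
  apply (rule beval_inj)
  apply (simp add: l3z l3w)
  apply (simp add: sysF_def sysG_def l3_def field_simps)
  apply algebra
  done
lemma darb4: "dZ (l4 c) * sysF c + dW (l4 c) * sysG c = (Cst (3*c/2) * Zv - Cst (c/2) * Wv) * l4 c"
  apply (rule beval_inj)
  apply (simp add: l4z l4w)
  apply (simp add: sysF_def sysG_def l4_def field_simps)
  apply algebra
  done


definition E :: "bipoly \<Rightarrow> complex \<times> complex \<Rightarrow> complex" where
  "E p x = beval p (fst x) (snd x)"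
definition Q :: "bipoly \<Rightarrow> bipoly \<Rightarrow> bipoly \<Rightarrow> complex \<times> complex \<Rightarrow> complex" where
  "Q p q r x = E p x * E q x / E r x ^ 3"
definition Qd :: "bipoly \<Rightarrow> bipoly \<Rightarrow> bipoly \<Rightarrow> (bipoly \<Rightarrow> bipoly) \<Rightarrow> complex \<times> complex \<Rightarrow> complex" where
  "Qd p q r D x = (E (D p) x * E q x * E r x + E p x * E (D q) x * E r x - 3 * E p x * E q x * E (D r) x) / E r x ^ 4"

lemma E_deriv: "(E p has_derivative (\<lambda>h. E (dZ p) x * fst h + E (dW p) x * snd h)) (at x)"
  unfolding E_def using beval_has_derivative[of p x] by (simp add: fun_eq_iff)

lemma E_cont[continuous_intros]: "isCont (E p) x"
  using E_deriv has_derivative_continuous by blast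

lemma Q_deriv:
  assumes "E r x \<noteq> 0"
  shows "(Q p q r has_derivative (\<lambda>h. Qd p q r dZ x * fst h + Qd p q r dW x * snd h)) (at x)"
proof -
  have "((\<lambda>x. E p x * E q x / E r x ^ 3) has_derivative
     (\<lambda>h. ((E p x * (E (dZ q) x * fst h + E (dW q) x * snd h) + (E (dZ p) x * fst h + E (dW p) x * snd h) * E q x) * E r x ^ 3
        - E p x * E q x * (of_nat 3 * (E (dZ r) x * fst h + E (dW r) x * snd h) * E r x ^ (3 - 1))) / (E r x ^ 3 * E r x ^ 3))) (at x)"
    by (intro has_derivative_divide' has_derivative_mult has_derivative_power E_deriv) (use assms in simp)
  then show ?thesis
    unfolding Q_def[abs_def]
    apply (rule has_derivative_eq_rhs)
    apply (rule ext)
    using assms by (simp add: Qd_def field_simps eval_nat_numeral)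
qed

lemma Qd_cont: "E r x \<noteq> 0 \<Longrightarrow> isCont (Qd p q r D) x"
  unfolding Qd_def[abs_def] by (intro continuous_intros) auto


lemma Q_deriv_z:
  assumes "E r (z,w) \<noteq> 0"
  shows "((\<lambda>u. Q p q r (u,w)) has_field_derivative Qd p q r dZ (z,w)) (at z)"
proof -
  have "((\<lambda>u. (u, w)) has_derivative (\<lambda>h. (h, 0))) (at z)"
    by (auto intro!: derivative_eq_intros)
  from has_derivative_compose[OF this Q_deriv[OF assms]]
  show ?thesis by (simp add: has_field_derivative_def o_def mult_commute_abs)
qed

lemma Q_deriv_w:
  assumes "E r (z,w) \<noteq> 0"
  shows "((\<lambda>v. Q p q r (z,v)) has_field_derivative Qd p q r dW (z,w)) (at w)"
proof -
  have "((\<lambda>v. (z, v)) has_derivative (\<lambda>h. (0, h))) (at w)"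
    by (auto intro!: derivative_eq_intros)
  from has_derivative_compose[OF this Q_deriv[OF assms]]
  show ?thesis by (simp add: has_field_derivative_def o_def mult_commute_abs)
qed

lemma darb_pt:
  assumes "dZ f * F + dW f * G = K * f"
  shows "E (dZ f) x * E F x + E (dW f) x * E G x = E K x * E f x"
  using arg_cong[OF assms, of "\<lambda>p. E p x"] by (simp add: E_def)

lemma Qd_flow:
  assumes "E r x \<noteq> 0"
    and "E (dZ p) x * E F x + E (dW p) x * E G x = kp * E p x"
    and "E (dZ q) x * E F x + E (dW q) x * E G x = kq * E q x"
    and "E (dZ r) x * E F x + E (dW r) x * E G x = kr * E r x"
  shows "Qd p q r dZ x * E F x + Qd p q r dW x * E G x = (kp + kq - 3 * kr) * Q p q r x"
proof -
  have "Qd p q r dZ x * E F x + Qd p q r dW x * E G x =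
    ((E (dZ p) x * E F x + E (dW p) x * E G x) * E q x * E r x + E p x * (E (dZ q) x * E F x + E (dW q) x * E G x) * E r x
     - 3 * E p x * E q x * (E (dZ r) x * E F x + E (dW r) x * E G x)) / E r x ^ 4"
    unfolding Qd_def using assms(1) by (simp add: field_simps)
  also have "\<dots> = (kp + kq - 3 * kr) * Q p q r x"
    unfolding assms(2-4) Q_def using assms(1) by (simp add: field_simps eval_nat_numeral)
  finally show ?thesis .
qed

lemma onorm_bound:
  fixes p q r s :: complex
  shows "onorm (\<lambda>v. (p * fst v + q * snd v, r * fst v + s * snd v)) \<le> norm p + norm q + norm r + norm s"
proof (rule onorm_le)
  fix v :: "complex \<times> complex"
  have "norm (p * fst v + q * snd v, r * fst v + s * snd v) \<le> norm (p * fst v + q * snd v) + norm (r * fst v + s * snd v)"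
    by (rule norm_Pair_le)
  also have "\<dots> \<le> (norm p * norm (fst v) + norm q * norm (snd v)) + (norm r * norm (fst v) + norm s * norm (snd v))"
    by (intro add_mono order_trans[OF norm_triangle_ineq]) (simp_all add: norm_mult)
  also have "\<dots> \<le> (norm p * norm v + norm q * norm v) + (norm r * norm v + norm s * norm v)"
  proof -
    have a: "norm (fst v) \<le> norm v" "norm (snd v) \<le> norm v"
      using norm_fst_le[of "fst v" "snd v"] norm_snd_le[of "snd v" "fst v"] by auto
    show ?thesis by (intro add_mono mult_left_mono a) auto
  qed
  finally show "norm (p * fst v + q * snd v, r * fst v + s * snd v) \<le> (norm p + norm q + norm r + norm s) * norm v"
    by (simp add: algebra_simps)
qed


lemma Z1_Q: "Z1 c z w = Q (l1 c) (l3 c) (l4 c) (z, w)"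
  by (simp add: Z1_def Q_def E_def)
lemma W1_Q: "W1 c z w = Q (l2 c) (l3 c) (l4 c) (z, w)"
  by (simp add: W1_def Q_def E_def)

lemma flow:
  assumes "E (l4 c) (z,w) \<noteq> 0"
  shows "(\<exists>a b. ((\<lambda>u. Z1 c u w) has_field_derivative a) (at z) \<and>
                      ((\<lambda>v. Z1 c z v) has_field_derivative b) (at w) \<and>
                      a * beval (sysF c) z w + b * beval (sysG c) z w = Z1 c z w) \<and>
               (\<exists>a b. ((\<lambda>u. W1 c u w) has_field_derivative a) (at z) \<and>
                      ((\<lambda>v. W1 c z v) has_field_derivative b) (at w) \<and>
                      a * beval (sysF c) z w + b * beval (sysG c) z w = - W1 c z w)"
proof -
  let ?x = "(z, w)"
  note d1 = darb_pt[OF darb1, of c ?x] and d2 = darb_pt[OF darb2, of c ?x]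
   and d3 = darb_pt[OF darb3, of c ?x] and d4 = darb_pt[OF darb4, of c ?x]
  have fl1: "Qd (l1 c) (l3 c) (l4 c) dZ ?x * E (sysF c) ?x + Qd (l1 c) (l3 c) (l4 c) dW ?x * E (sysG c) ?x
     = Q (l1 c) (l3 c) (l4 c) ?x"
    using Qd_flow[OF assms d1 d3 d4] by (simp add: E_def algebra_simps)
  have fl2: "Qd (l2 c) (l3 c) (l4 c) dZ ?x * E (sysF c) ?x + Qd (l2 c) (l3 c) (l4 c) dW ?x * E (sysG c) ?x
     = - Q (l2 c) (l3 c) (l4 c) ?x"
    using Qd_flow[OF assms d2 d3 d4] by (simp add: E_def algebra_simps)
  show ?thesis
    unfolding Z1_Q W1_Q
    apply (intro conjI exI)
         apply (rule Q_deriv_z[OF assms])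
        apply (rule Q_deriv_w[OF assms])
       apply (use fl1 in \<open>simp add: E_def\<close>)
      apply (rule Q_deriv_z[OF assms])
     apply (rule Q_deriv_w[OF assms])
    apply (use fl2 in \<open>simp add: E_def\<close>)
    done
qed


lemma inj_part:
  "\<exists>U :: (complex \<times> complex) set. open U \<and> (0, 0) \<in> U \<and>
            (\<forall>(z, w) \<in> U. beval (l4 c) z w \<noteq> 0) \<and>
            inj_on (\<lambda>(z, w). (Z1 c z w, W1 c z w)) U"
proof -
  define S where "S = {x. E (l4 c) x \<noteq> 0}"
  define a :: "complex \<times> complex" where "a = (0, 0)"
  define f where "f = (\<lambda>x. (Q (l1 c) (l3 c) (l4 c) x, Q (l2 c) (l3 c) (l4 c) x))"
  define A where "A = Qd (l1 c) (l3 c) (l4 c) dZ"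
  define B where "B = Qd (l1 c) (l3 c) (l4 c) dW"
  define C where "C = Qd (l2 c) (l3 c) (l4 c) dZ"
  define D where "D = Qd (l2 c) (l3 c) (l4 c) dW"
  define f' where "f' = (\<lambda>x h. (A x * fst h + B x * snd h, C x * fst h + D x * snd h))"
  have fe: "(\<lambda>(z, w). (Z1 c z w, W1 c z w)) = f"
    by (auto simp: f_def Z1_Q W1_Q fun_eq_iff)
  have "open S" unfolding S_def
    by (intro open_Collect_neq continuous_at_imp_continuous_on ballI E_cont continuous_intros)
  have e4a: "E (l4 c) a = 1" by (simp add: a_def E_def l4_def)
  hence "a \<in> S" by (simp add: S_def)
  have derf: "(f has_derivative f' x) (at x)" if "x \<in> S" for x
    using that unfolding f_def f'_def A_def B_def C_def D_def S_def
    by (intro has_derivative_Pair Q_deriv) auto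
  have va: "A a = 1" "B a = 0" "C a = 0" "D a = 1"
    by (simp_all add: A_def B_def C_def D_def Qd_def E_def a_def l1z l1w l2z l2w l3z l3w l4z l4w,
        simp_all add: l1_def l2_def l3_def l4_def)
  have fa: "(\<lambda>x. x) \<circ> f' a = id" by (simp add: f'_def va fun_eq_iff)
  have cont: "\<exists>d>0. \<forall>x. dist a x < d \<longrightarrow> onorm (\<lambda>v. f' x v - f' a v) < e" if "e > 0" for e
  proof -
    define g where "g = (\<lambda>x. norm (A x - A a) + norm (B x - B a) + norm (C x - C a) + norm (D x - D a))"
    have "isCont g a" unfolding g_def A_def B_def C_def D_def
      by (intro continuous_intros Qd_cont) (simp_all add: e4a)
    then obtain d where d: "d > 0" "\<And>x. dist x a < d \<Longrightarrow> dist (g x) (g a) < e"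
      using \<open>e > 0\<close> unfolding continuous_at_eps_delta by blast
    have ga: "g a = 0" by (simp add: g_def)
    show ?thesis
    proof (intro exI[of _ d] conjI allI impI d(1))
      fix x assume "dist a x < d"
      hence "g x < e" using d(2)[of x] ga by (simp add: dist_commute g_def)
      have "(\<lambda>v. f' x v - f' a v) = (\<lambda>v. ((A x - A a) * fst v + (B x - B a) * snd v, (C x - C a) * fst v + (D x - D a) * snd v))"
        by (simp add: f'_def fun_eq_iff algebra_simps)
      hence "onorm (\<lambda>v. f' x v - f' a v) \<le> g x"
        using onorm_bound by (simp add: g_def)
      thus "onorm (\<lambda>v. f' x v - f' a v) < e" using \<open>g x < e\<close> by simp
    qed
  qed
  obtain r where r: "r > 0" "ball a r \<subseteq> S" "inj_on f (ball a r)"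
    using has_derivative_locally_injective[OF \<open>a \<in> S\<close> \<open>open S\<close> bounded_linear_ident fa derf cont]
    by blast
  show ?thesis
    apply (rule exI[of _ "ball a r"])
    using r by (auto simp: fe a_def S_def E_def)
qed

theorem mainTheorem4:
  fixes c :: complex
  shows "darboux_factor (sysF c) (sysG c) (l1 c) \<and>
         darboux_factor (sysF c) (sysG c) (l2 c) \<and>
         darboux_factor (sysF c) (sysG c) (l3 c) \<and>
         darboux_factor (sysF c) (sysG c) (l4 c) \<and>
         (\<exists>U :: (complex \<times> complex) set. open U \<and> (0, 0) \<in> U \<and>
            (\<forall>(z, w) \<in> U. beval (l4 c) z w \<noteq> 0) \<and>
            inj_on (\<lambda>(z, w). (Z1 c z w, W1 c z w)) U \<and>
            (\<forall>(z, w) \<in> U.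
               (\<exists>a b. ((\<lambda>u. Z1 c u w) has_field_derivative a) (at z) \<and>
                      ((\<lambda>v. Z1 c z v) has_field_derivative b) (at w) \<and>
                      a * beval (sysF c) z w + b * beval (sysG c) z w = Z1 c z w) \<and>
               (\<exists>a b. ((\<lambda>u. W1 c u w) has_field_derivative a) (at z) \<and>
                      ((\<lambda>v. W1 c z v) has_field_derivative b) (at w) \<and>
                      a * beval (sysF c) z w + b * beval (sysG c) z w = - W1 c z w)))"
proof -
  have D: "darboux_factor (sysF c) (sysG c) (l1 c)" "darboux_factor (sysF c) (sysG c) (l2 c)"
    "darboux_factor (sysF c) (sysG c) (l3 c)" "darboux_factor (sysF c) (sysG c) (l4 c)"
    unfolding darboux_factor_def using darb1 darb2 darb3 darb4 by blast+
  obtain U :: "(complex \<times> complex) set" where U: "open U" "(0,0) \<in> U"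
    "\<forall>(z, w) \<in> U. beval (l4 c) z w \<noteq> 0" "inj_on (\<lambda>(z, w). (Z1 c z w, W1 c z w)) U"
    using inj_part[of c] by blast
  have "\<forall>(z, w) \<in> U.
               (\<exists>a b. ((\<lambda>u. Z1 c u w) has_field_derivative a) (at z) \<and>
                      ((\<lambda>v. Z1 c z v) has_field_derivative b) (at w) \<and>
                      a * beval (sysF c) z w + b * beval (sysG c) z w = Z1 c z w) \<and>
               (\<exists>a b. ((\<lambda>u. W1 c u w) has_field_derivative a) (at z) \<and>
                      ((\<lambda>v. W1 c z v) has_field_derivative b) (at w) \<and>
                      a * beval (sysF c) z w + b * beval (sysG c) z w = - W1 c z w)"
  proof (intro ballI, clarify)
    fix z w assume "(z, w) \<in> U"
    hence "E (l4 c) (z, w) \<noteq> 0" using U(3) by (auto simp: E_def)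
    from flow[OF this] show "(\<exists>a b. ((\<lambda>u. Z1 c u w) has_field_derivative a) (at z) \<and>
                      ((\<lambda>v. Z1 c z v) has_field_derivative b) (at w) \<and>
                      a * beval (sysF c) z w + b * beval (sysG c) z w = Z1 c z w) \<and>
               (\<exists>a b. ((\<lambda>u. W1 c u w) has_field_derivative a) (at z) \<and>
                      ((\<lambda>v. W1 c z v) has_field_derivative b) (at w) \<and>
                      a * beval (sysF c) z w + b * beval (sysG c) z w = - W1 c z w)" .
  qed
  with D U show ?thesis by blast
qed

end
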